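(* The semi-metric space $(\mathcal D_n^+,d_s)$ is complete: every sequence $(\Delta^{(k)})_{k\ge0}$ in $\mathcal D_n^+$ such that for every $\varepsilon>0$ there is $K$ with $d_s(\Delta^{(p)},\Delta^{(q)})\le\varepsilon$ for all $p,q\ge K$ converges for $d_s$ to some $\Delta^{(\infty)}\in\mathcal D_n^+$, i.e. $d_s(\Delta^{(k)},\Delta^{(\infty)})\to0$.
   Context: $\mathcal D_n^+$ is the set of $n\times n$ diagonal matrices with positive diagonal entries, and $d_s(\Delta,\Delta')=\max_i\frac{|\Delta_i-\Delta'_i|}{\sqrt{\Delta_i\Delta'_i}}$. *)

theory Defs
  imports "HOL-Analysis.Analysis"
begin

definition pos_diag :: "(real^'n^'n) set" where
  "pos_diag = {D. (\<forall>i j. i \<noteq> j \<longrightarrow> D $ i $ j = 0) \<and> (\<forall>i. D $ i $ i > 0)}"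

definition d_s :: "real^'n^'n \<Rightarrow> real^'n^'n \<Rightarrow> real" where
  "d_s D D' = Max (range (\<lambda>i. \<bar>D $ i $ i - D' $ i $ i\<bar> / sqrt (D $ i $ i * D' $ i $ i)))"

end

theory Submission imports Defs begin

lemma ln_bound_ge:
  fixes x y :: real assumes "y > 0" "x \<ge> y"
  shows "ln x - ln y \<le> (\<bar>x - y\<bar> / sqrt (x*y)) * (1 + \<bar>x - y\<bar> / sqrt (x*y))"
proof -
  define a where "a = sqrt x" define b where "b = sqrt y"
  have b0: "b > 0" using assms b_def by simp
  have ab: "a \<ge> b" using assms a_def b_def by simp
  have x: "x = a*a" "y = b*b" using assms a_def b_def by (auto simp: real_sqrt_mult_self)
  have sq: "sqrt (x*y) = a*b" using assms a_def b_def by (simp add: real_sqrt_mult)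
  define d where "d = (x - y) / (a*b)"
  have d0: "d \<ge> 0" using d_def assms b0 ab by simp
  have "ln x - ln y = ln (x/y)" using assms by (simp add: ln_div)
  also have "\<dots> \<le> x/y - 1" using assms by (intro ln_le_minus_one) simp
  also have "x/y - 1 = d * (a/b)"
  proof -
    have e: "d * (a*b) = x - y" using d_def b0 ab by simp
    have "x/y - 1 = (x-y)/(b*b)" using x b0 by (simp add: field_simps)
    also have "\<dots> = d * (a*b) / (b*b)" using e by simp
    also have "\<dots> = d * (a/b)" using b0 by (simp add: field_simps)
    finally show ?thesis .
  qed
  also have "a/b \<le> 1 + d"
  proof -
    have "a/b - 1 = (a-b)/b" using b0 by (simp add: field_simps)
    also have "\<dots> \<le> (a-b)*(a+b)/(a*b)" using b0 ab by (simp add: field_simps)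
    also have "\<dots> = d" using d_def x by (simp add: algebra_simps)
    finally show ?thesis by simp
  qed
  hence "d * (a/b) \<le> d * (1+d)" using d0 by (rule mult_left_mono)
  finally show ?thesis using sq d_def assms by simp
qed

lemma ln_bound:
  fixes x y :: real assumes "y > 0" "x > 0"
  shows "\<bar>ln x - ln y\<bar> \<le> (\<bar>x - y\<bar> / sqrt (x*y)) * (1 + \<bar>x - y\<bar> / sqrt (x*y))"
proof (cases "x \<ge> y")
  case True thus ?thesis using ln_bound_ge[OF assms(1) True] assms by simp
next
  case False
  hence "ln y - ln x \<le> (\<bar>y - x\<bar> / sqrt (y*x)) * (1 + \<bar>y - x\<bar> / sqrt (y*x))"
    using ln_bound_ge[of x y] assms by simp
  thus ?thesis using False assms by (simp add: abs_minus_commute mult.commute)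
qed

lemma d_s_ge:
  fixes D D' :: "real^'n^'n"
  shows "\<bar>D $ i $ i - D' $ i $ i\<bar> / sqrt (D $ i $ i * D' $ i $ i) \<le> d_s D D'"
  unfolding d_s_def by (rule Max_ge) auto

lemma d_s_le_sum:
  fixes D D' :: "real^'n^'n"
  shows "d_s D D' \<le> (\<Sum>i\<in>UNIV. \<bar>\<bar>D $ i $ i - D' $ i $ i\<bar> / sqrt (D $ i $ i * D' $ i $ i)\<bar>)"
  unfolding d_s_def
proof (subst Max_le_iff, simp, simp, clarify)
  fix i :: 'n
  show "\<bar>D $ i $ i - D' $ i $ i\<bar> / sqrt (D $ i $ i * D' $ i $ i)
     \<le> (\<Sum>i\<in>UNIV. \<bar>\<bar>D $ i $ i - D' $ i $ i\<bar> / sqrt (D $ i $ i * D' $ i $ i)\<bar>)"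
  proof -
    let ?f = "\<lambda>i. \<bar>\<bar>D $ i $ i - D' $ i $ i\<bar> / sqrt (D $ i $ i * D' $ i $ i)\<bar>"
    have "?f i \<le> sum ?f UNIV" by (rule member_le_sum) auto
    thus ?thesis by linarith
  qed
qed

theorem mainTheorem8:
  fixes \<Delta> :: "nat \<Rightarrow> real^'n^'n"
  assumes in_D: "\<And>k. \<Delta> k \<in> pos_diag"
    and cauchy: "\<And>\<epsilon>. \<epsilon> > 0 \<Longrightarrow> \<exists>K. \<forall>p\<ge>K. \<forall>q\<ge>K. d_s (\<Delta> p) (\<Delta> q) \<le> \<epsilon>"
  shows "\<exists>\<Delta>inf \<in> pos_diag. (\<lambda>k. d_s (\<Delta> k) \<Delta>inf) \<longlonglongrightarrow> 0"
proof -
  have pos: "\<Delta> k $ i $ i > 0" for k i using in_D[of k] unfolding pos_diag_def by auto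
  have cl: "Cauchy (\<lambda>k. ln (\<Delta> k $ i $ i))" for i
  proof (rule metric_CauchyI)
    fix e :: real assume e: "e > 0"
    define e' where "e' = min 1 (e/4)"
    have e'0: "e' > 0" using e e'_def by simp
    obtain K where K: "\<forall>p\<ge>K. \<forall>q\<ge>K. d_s (\<Delta> p) (\<Delta> q) \<le> e'" using cauchy[OF e'0] by blast
    show "\<exists>M. \<forall>m\<ge>M. \<forall>n\<ge>M. dist (ln (\<Delta> m $ i $ i)) (ln (\<Delta> n $ i $ i)) < e"
    proof (intro exI allI impI)
      fix m n assume mn: "K \<le> m" "K \<le> n"
      define t where "t = \<bar>\<Delta> m $ i $ i - \<Delta> n $ i $ i\<bar> / sqrt (\<Delta> m $ i $ i * \<Delta> n $ i $ i)"
      have t0: "t \<ge> 0" unfolding t_def using pos[of m i] pos[of n i] by simp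
      have "t \<le> e'" using d_s_ge[of "\<Delta> m" i "\<Delta> n"] K mn t_def by force
      hence "t * (1 + t) \<le> e' * (1 + e')" using t0 by (intro mult_mono) auto
      also have "\<dots> \<le> e' * 2" using e'0 e'_def by (intro mult_left_mono) auto
      also have "\<dots> < e" using e e'_def by linarith
      finally have "t * (1+t) < e" .
      thus "dist (ln (\<Delta> m $ i $ i)) (ln (\<Delta> n $ i $ i)) < e"
        using ln_bound[OF pos[of n i] pos[of m i]] t_def by (simp add: dist_real_def)
    qed
  qed
  define L where "L i = lim (\<lambda>k. ln (\<Delta> k $ i $ i))" for i
  have Ll: "(\<lambda>k. ln (\<Delta> k $ i $ i)) \<longlonglongrightarrow> L i" for i
    using cl[of i] unfolding L_def by (simp add: Cauchy_convergent_iff convergent_LIMSEQ_iff)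
  have al: "(\<lambda>k. \<Delta> k $ i $ i) \<longlonglongrightarrow> exp (L i)" for i
    using tendsto_exp[OF Ll[of i]] pos by simp
  define Di :: "real^'n^'n" where "Di = (\<chi> i j. if i = j then exp (L i) else 0)"
  have Dii: "Di $ i $ i = exp (L i)" for i unfolding Di_def by simp
  have "Di \<in> pos_diag" unfolding pos_diag_def Di_def by auto
  moreover have "(\<lambda>k. d_s (\<Delta> k) Di) \<longlonglongrightarrow> 0"
  proof (rule tendsto_sandwich[of "\<lambda>_. 0"])
    show "\<forall>\<^sub>F k in sequentially. 0 \<le> d_s (\<Delta> k) Di"
    proof (intro always_eventually allI)
      fix k
      obtain i :: 'n where True by blast
      have "0 \<le> \<bar>\<Delta> k $ i $ i - Di $ i $ i\<bar> / sqrt (\<Delta> k $ i $ i * Di $ i $ i)"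
        using pos[of k i] Dii[of i] by simp
      also have "\<dots> \<le> d_s (\<Delta> k) Di" by (rule d_s_ge)
      finally show "0 \<le> d_s (\<Delta> k) Di" .
    qed
    show "\<forall>\<^sub>F k in sequentially. d_s (\<Delta> k) Di \<le> (\<Sum>i\<in>UNIV. \<bar>\<bar>\<Delta> k $ i $ i - Di $ i $ i\<bar> / sqrt (\<Delta> k $ i $ i * Di $ i $ i)\<bar>)"
      by (intro always_eventually allI d_s_le_sum)
    show "(\<lambda>_. 0) \<longlonglongrightarrow> (0::real)" by simp
    show "(\<lambda>k. \<Sum>i\<in>UNIV. \<bar>\<bar>\<Delta> k $ i $ i - Di $ i $ i\<bar> / sqrt (\<Delta> k $ i $ i * Di $ i $ i)\<bar>) \<longlonglongrightarrow> 0"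
    proof (rule tendsto_null_sum)
      fix i :: 'n assume "i \<in> (UNIV::'n set)"
      have "(\<lambda>k. \<bar>\<Delta> k $ i $ i - Di $ i $ i\<bar> / sqrt (\<Delta> k $ i $ i * Di $ i $ i)) \<longlonglongrightarrow>
             \<bar>exp (L i) - exp (L i)\<bar> / sqrt (exp (L i) * exp (L i))"
        unfolding Dii by (intro tendsto_intros al) simp
      hence "(\<lambda>k. \<bar>\<Delta> k $ i $ i - Di $ i $ i\<bar> / sqrt (\<Delta> k $ i $ i * Di $ i $ i)) \<longlonglongrightarrow> 0" by simp
      thus "(\<lambda>k. \<bar>\<bar>\<Delta> k $ i $ i - Di $ i $ i\<bar> / sqrt (\<Delta> k $ i $ i * Di $ i $ i)\<bar>) \<longlonglongrightarrow> 0"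
        by (rule tendsto_rabs_zero)
    qed
  qed
  ultimately show ?thesis by blast
qed

end
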